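(* Let $b\ge2$ be an integer, $\lambda\in(1/b,1)$, $k\in\mathbb{Z}_+$, let $\tau$ be a $\mathbb{Z}$-periodic $C^k$ function, let $p\ge2$ be an integer with $\gcd(p,b)=1$, and let $\tilde\tau(x)=\tau(px)$. Then (i) $t\in\mathbb{R}$ is a $C^k$-regulating period of $W^\tau$ if and only if $t/p$ is a $C^k$-regulating period of $W^{\tilde\tau}$; (ii) $\tau$ satisfies condition (H) if and only if $\tilde\tau$ satisfies condition (H).
   Context: $W^\psi(x)=\sum_{n\ge0}\lambda^n\psi(b^nx)$; $t$ is a $C^k$-regulating period of $W^\psi$ if $x\mapsto W^\psi(x+t)-W^\psi(x)$ is $C^k$. With $\Sigma=\{0,\dots,b-1\}^{\mathbb{Z}_+}$, $\gamma=1/(b\lambda)$ and $Y^\psi(x,\mathbf{j})=-\sum_{n\ge1}\gamma^n\psi'\!\left(\frac{x}{b^n}+\frac{j_1}{b^n}+\frac{j_2}{b^{n-1}}+\cdots+\frac{j_n}{b}\right)$, $\psi$ satisfies condition (H) if $Y^\psi(\cdot,\mathbf{j})-Y^\psi(\cdot,\mathbf{i})\not\equiv0$ for all $\mathbf{i}\ne\mathbf{j}\in\Sigma$. *)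

theory Defs
  imports "HOL-Analysis.Analysis"
begin

definition Ck :: "nat \<Rightarrow> (real \<Rightarrow> real) \<Rightarrow> bool" where
  "Ck k f \<longleftrightarrow> (\<forall>j<k. \<forall>x. ((deriv ^^ j) f) differentiable (at x))
                 \<and> continuous_on UNIV ((deriv ^^ k) f)"

definition W :: "nat \<Rightarrow> real \<Rightarrow> (real \<Rightarrow> real) \<Rightarrow> real \<Rightarrow> real" where
  "W b lam psi x = (\<Sum>n. lam ^ n * psi (real b ^ n * x))"

definition regulating_period ::
  "nat \<Rightarrow> real \<Rightarrow> nat \<Rightarrow> (real \<Rightarrow> real) \<Rightarrow> real \<Rightarrow> bool" where
  "regulating_period b lam k psi t \<longleftrightarrow> Ck k (\<lambda>x. W b lam psi (x + t) - W b lam psi x)"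

text \<open>Symbolic space Sigma = {0,...,b-1}^{Z_+}; a sequence j_1, j_2, ... is
  represented by j :: nat => nat with j_i = j (i - 1).\<close>
definition Sigma_b :: "nat \<Rightarrow> (nat \<Rightarrow> nat) set" where
  "Sigma_b b = {j. \<forall>n. j n < b}"

definition Y :: "nat \<Rightarrow> real \<Rightarrow> (real \<Rightarrow> real) \<Rightarrow> real \<Rightarrow> (nat \<Rightarrow> nat) \<Rightarrow> real" where
  "Y b lam psi x j = - (\<Sum>m. (1 / (real b * lam)) ^ (Suc m) *
      deriv psi (x / real b ^ (Suc m) + (\<Sum>i<Suc m. real (j i) / real b ^ (Suc m - i))))"

definition condition_H :: "nat \<Rightarrow> real \<Rightarrow> (real \<Rightarrow> real) \<Rightarrow> bool" where
  "condition_H b lam psi \<longleftrightarrow>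
     (\<forall>i\<in>Sigma_b b. \<forall>j\<in>Sigma_b b. i \<noteq> j \<longrightarrow> (\<exists>x. Y b lam psi x j - Y b lam psi x i \<noteq> 0))"

end

theory Submission imports Defs "HOL-Number_Theory.Cong" begin


definition NN :: "nat \<Rightarrow> (nat \<Rightarrow> nat) \<Rightarrow> nat \<Rightarrow> nat" where
  "NN b j n = (\<Sum>i<n. j i * b ^ i)"

definition sig :: "nat \<Rightarrow> nat \<Rightarrow> (nat \<Rightarrow> nat) \<Rightarrow> nat \<Rightarrow> nat" where
  "sig b p j i = (p * NN b j (Suc i) div b ^ i) mod b"

lemma NN_Suc: "NN b j (Suc n) = NN b j n + j n * b ^ n"
  by (simp add: NN_def)

lemma NN_less: "j \<in> Sigma_b b \<Longrightarrow> NN b j n < b ^ n"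
proof (induction n)
  case 0 then show ?case by (simp add: NN_def)
next
  case (Suc n)
  have "j n < b" using Suc.prems by (simp add: Sigma_b_def)
  then have "j n + 1 \<le> b" by simp
  then have "(j n + 1) * b ^ n \<le> b * b ^ n" by (rule mult_right_mono) simp
  then show ?case using Suc by (simp add: NN_Suc algebra_simps)
qed

lemma NN_sig: "b > 0 \<Longrightarrow> NN b (sig b p j) n = (p * NN b j n) mod b ^ n"
proof (induction n)
  case 0 then show ?case by (simp add: NN_def)
next
  case (Suc n)
  define X where "X = p * NN b j (Suc n)"
  have "X mod b ^ n = p * NN b j n mod b ^ n"
    unfolding X_def NN_Suc distrib_left mult.assoc[symmetric] by simp
  have X2: "X mod (b ^ n * b) = b ^ n * (X div b ^ n mod b) + X mod b ^ n"
    by (rule mod_mult2_eq)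
  have "NN b (sig b p j) (Suc n) = NN b (sig b p j) n + sig b p j n * b ^ n" by (rule NN_Suc)
  also have "\<dots> = X mod b ^ n + b ^ n * (X div b ^ n mod b)"
    using Suc.IH Suc.prems \<open>X mod b ^ n = p * NN b j n mod b ^ n\<close> unfolding sig_def X_def by simp
  also have "\<dots> = X mod (b ^ n * b)" using X2 by simp
  finally show ?case by (simp add: X_def mult.commute)
qed

lemma NN_eq_imp_eq: assumes "b > 0" "\<And>n. NN b i n = NN b j n" shows "i = j"
proof
  fix n
  have "NN b i (Suc n) = NN b j (Suc n)" by (rule assms(2))
  then have "i n * b ^ n = j n * b ^ n" using assms(2)[of n] by (simp add: NN_Suc)
  then show "i n = j n" using assms(1) by simp
qed

lemma sig_in: "b > 0 \<Longrightarrow> sig b p j \<in> Sigma_b b"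
  by (simp add: Sigma_b_def sig_def)

lemma sig_inj:
  assumes "b > 0" "coprime p b" "i \<in> Sigma_b b" "j \<in> Sigma_b b" "sig b p i = sig b p j"
  shows "i = j"
proof (rule NN_eq_imp_eq[OF assms(1)])
  fix n
  have cp: "coprime p (b ^ n)" using assms(2) by simp
  have "p * NN b i n mod b ^ n = p * NN b j n mod b ^ n"
    using NN_sig[OF assms(1), of p i n] NN_sig[OF assms(1), of p j n] assms(5) by simp
  then have "[p * NN b i n = p * NN b j n] (mod b ^ n)" by (simp add: cong_def)
  then have "[NN b i n = NN b j n] (mod b ^ n)" using cong_mult_lcancel_nat[OF cp] by simp
  then show "NN b i n = NN b j n"
    using cong_less_modulus_unique_nat NN_less assms(3,4) by blast
qed

lemma sig_surj:
  assumes "b > 0" "coprime p b" "j' \<in> Sigma_b b"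
  shows "\<exists>j\<in>Sigma_b b. sig b p j = j'"
proof -
  have "\<forall>m. \<exists>q. [p * q = Suc 0] (mod b ^ m)"
    using assms(2) by (simp add: cong_solve_coprime_nat)
  then obtain q where q: "\<And>m. [p * q m = Suc 0] (mod b ^ m)" by metis
  define u where "u m = (q m * NN b j' m) mod b ^ m" for m
  have u_less: "u m < b ^ m" for m using assms(1) by (simp add: u_def)
  have u_cong: "[p * u m = NN b j' m] (mod b ^ m)" for m
  proof -
    have "[p * u m = p * (q m * NN b j' m)] (mod b ^ m)"
      unfolding u_def by (simp add: cong_def mod_mult_right_eq)
    moreover have "[p * (q m * NN b j' m) = Suc 0 * NN b j' m] (mod b ^ m)"
      unfolding mult.assoc[symmetric] by (rule cong_mult[OF q cong_refl])
    ultimately show ?thesis by (simp add: cong_trans)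
  qed
  have uniq: "x = y" if "[p * x = p * y] (mod b ^ m)" "x < b ^ m" "y < b ^ m" for x y m
  proof -
    have cp: "coprime p (b ^ m)" using assms(2) by simp
    show ?thesis using that cong_mult_lcancel_nat[OF cp] cong_less_modulus_unique_nat by blast
  qed
  have u_mod: "u (Suc n) mod b ^ n = u n" for n
  proof (rule uniq[of "u (Suc n) mod b ^ n" "u n" n])
    have "b ^ n dvd b ^ Suc n" by (simp add: le_imp_power_dvd)
    have "[p * (u (Suc n) mod b ^ n) = p * u (Suc n)] (mod b ^ n)"
      by (simp add: cong_def mod_mult_right_eq)
    moreover have "[p * u (Suc n) = NN b j' (Suc n)] (mod b ^ n)"
      using u_cong[of "Suc n"] \<open>b ^ n dvd b ^ Suc n\<close> cong_dvd_modulus_nat by blast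
    moreover have "[NN b j' (Suc n) = NN b j' n] (mod b ^ n)"
      by (simp add: NN_Suc cong_def)
    moreover have "[NN b j' n = p * u n] (mod b ^ n)" using u_cong cong_sym by blast
    ultimately show "[p * (u (Suc n) mod b ^ n) = p * u n] (mod b ^ n)"
      using cong_trans by blast
    show "u (Suc n) mod b ^ n < b ^ n" using assms(1) by simp
    show "u n < b ^ n" by (rule u_less)
  qed
  define j where "j i = (u (Suc i) div b ^ i) mod b" for i
  have jS: "j \<in> Sigma_b b" using assms(1) by (simp add: Sigma_b_def j_def)
  have NNj: "NN b j n = u n" for n
  proof (induction n)
    case 0 then show ?case using u_less[of 0] by (simp add: NN_def)
  next
    case (Suc n)
    have "u (Suc n) mod (b ^ n * b) = b ^ n * (u (Suc n) div b ^ n mod b) + u (Suc n) mod b ^ n"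
      by (rule mod_mult2_eq)
    moreover have "u (Suc n) mod (b ^ n * b) = u (Suc n)"
      using u_less[of "Suc n"] by (metis mod_less power_Suc2)
    ultimately show ?case using Suc u_mod[of n] by (simp add: NN_Suc j_def algebra_simps)
  qed
  have "sig b p j = j'"
  proof (rule NN_eq_imp_eq[OF assms(1)])
    fix n
    have "NN b (sig b p j) n = p * u n mod b ^ n" using NN_sig[OF assms(1)] NNj by simp
    also have "\<dots> = NN b j' n mod b ^ n" using u_cong[of n] by (simp add: cong_def)
    also have "\<dots> = NN b j' n" using NN_less[OF assms(3)] by simp
    finally show "NN b (sig b p j) n = NN b j' n" .
  qed
  then show ?thesis using jS by blast
qed



lemma scale_has_deriv:
  assumes "G differentiable (at (c * x))"
  shows "((\<lambda>x. a * G (c * x)) has_real_derivative a * (deriv G (c * x) * c)) (at x)"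
proof -
  have d1: "(G has_real_derivative deriv G (c * x)) (at (c * x))"
    using assms by (simp add: DERIV_deriv_iff_real_differentiable)
  have d2: "((\<lambda>x. c * x) has_real_derivative c) (at x)"
    by (auto intro!: derivative_eq_intros)
  show ?thesis using DERIV_cmult[OF DERIV_chain2[OF d1 d2]] .
qed

lemma iter_deriv_scale:
  assumes "Ck k g"
  shows "j \<le> k \<Longrightarrow> (deriv ^^ j) (\<lambda>x. g (c * x)) = (\<lambda>x. c ^ j * (deriv ^^ j) g (c * x))"
proof (induction j)
  case 0 then show ?case by simp
next
  case (Suc j)
  then have jk: "j < k" by simp
  have "(deriv ^^ Suc j) (\<lambda>x. g (c * x)) = deriv (\<lambda>x. c ^ j * (deriv ^^ j) g (c * x))"
    using Suc by simp
  also have "\<dots> = (\<lambda>x. c ^ Suc j * (deriv ^^ Suc j) g (c * x))"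
  proof
    fix x
    have "((deriv ^^ j) g) differentiable (at (c * x))" using assms jk by (simp add: Ck_def)
    from DERIV_imp_deriv[OF scale_has_deriv[OF this, of "c ^ j"]]
    show "deriv (\<lambda>x. c ^ j * (deriv ^^ j) g (c * x)) x = c ^ Suc j * (deriv ^^ Suc j) g (c * x)"
      by (simp add: algebra_simps)
  qed
  finally show ?case .
qed

lemma Ck_scale:
  assumes "Ck k g"
  shows "Ck k (\<lambda>x. g (c * x))"
  unfolding Ck_def
proof (intro conjI allI impI)
  fix j x assume jk: "j < k"
  have "((deriv ^^ j) g) differentiable (at (c * x))" using assms jk by (simp add: Ck_def)
  from scale_has_deriv[OF this, of "c ^ j"]
  have "(\<lambda>x. c ^ j * (deriv ^^ j) g (c * x)) differentiable (at x)"
    using real_differentiable_def by blast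
  then show "(deriv ^^ j) (\<lambda>x. g (c * x)) differentiable at x"
    using iter_deriv_scale[OF assms, of j c] jk by simp
next
  have "continuous_on UNIV ((deriv ^^ k) g)" using assms by (simp add: Ck_def)
  then have "continuous_on UNIV (\<lambda>x. (deriv ^^ k) g (c * x))"
    by (rule continuous_on_compose2) (auto intro!: continuous_intros)
  then have "continuous_on UNIV (\<lambda>x. c ^ k * (deriv ^^ k) g (c * x))"
    by (auto intro!: continuous_intros)
  then show "continuous_on UNIV ((deriv ^^ k) (\<lambda>x. g (c * x)))"
    using iter_deriv_scale[OF assms, of k c] by simp
qed

lemma Ck_scale_iff:
  assumes "c \<noteq> 0"
  shows "Ck k (\<lambda>x. g (c * x)) \<longleftrightarrow> Ck k g"
proof
  assume "Ck k (\<lambda>x. g (c * x))"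
  from Ck_scale[OF this, of "1 / c"] show "Ck k g" using assms by simp
qed (rule Ck_scale)

lemma sum_NN:
  assumes "b > 0"
  shows "(\<Sum>i<n. real (j i) / real b ^ (n - i)) = real (NN b j n) / real b ^ n"
proof -
  have "real (NN b j n) / real b ^ n = (\<Sum>i<n. real (j i) * real b ^ i / real b ^ n)"
    unfolding NN_def by (simp add: sum_divide_distrib)
  also have "\<dots> = (\<Sum>i<n. real (j i) / real b ^ (n - i))"
  proof (rule sum.cong)
    fix i assume "i \<in> {..<n}"
    then have "real b ^ (n - i) = real b ^ n / real b ^ i"
      using assms by (simp add: power_diff)
    then show "real (j i) * real b ^ i / real b ^ n = real (j i) / real b ^ (n - i)"
      using assms by simp
  qed simp
  finally show ?thesis by simp
qed


lemma deriv_scale_fun: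
  fixes tau :: "real \<Rightarrow> real"
  assumes "\<forall>x. tau differentiable at x"
  shows "deriv (\<lambda>x. tau (c * x)) y = c * deriv tau (c * y)"
  using DERIV_imp_deriv[OF scale_has_deriv[of tau c y 1]] assms by simp

lemma deriv_periodic1:
  fixes tau :: "real \<Rightarrow> real"
  assumes "\<forall>x. tau (x + 1) = tau x" "\<forall>x. tau differentiable at x"
  shows "deriv tau (y + 1) = deriv tau y"
proof -
  have d1: "(tau has_real_derivative deriv tau (y + 1)) (at (y + 1))"
    using assms(2) by (simp add: DERIV_deriv_iff_real_differentiable)
  have d2: "((\<lambda>x. x + 1) has_real_derivative 1) (at y)"
    by (auto intro!: derivative_eq_intros)
  have "((\<lambda>x. tau (x + 1)) has_real_derivative deriv tau (y + 1) * 1) (at y)"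
    by (rule DERIV_chain2[OF d1 d2])
  moreover have "(\<lambda>x. tau (x + 1)) = tau" using assms(1) by auto
  ultimately have "(tau has_real_derivative deriv tau (y + 1)) (at y)" by simp
  from DERIV_imp_deriv[OF this] show ?thesis by simp
qed

lemma deriv_periodic_nat:
  fixes tau :: "real \<Rightarrow> real"
  assumes "\<forall>x. tau (x + 1) = tau x" "\<forall>x. tau differentiable at x"
  shows "deriv tau (y + real K) = deriv tau y"
proof (induction K)
  case 0 then show ?case by simp
next
  case (Suc K)
  have "deriv tau (y + real (Suc K)) = deriv tau ((y + real K) + 1)" by (simp add: algebra_simps)
  also have "\<dots> = deriv tau (y + real K)" by (rule deriv_periodic1[OF assms])
  also have "\<dots> = deriv tau y" by (rule Suc.IH)
  finally show ?case .
qed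

lemma deriv_periodic_int:
  fixes tau :: "real \<Rightarrow> real"
  assumes "\<forall>x. tau (x + 1) = tau x" "\<forall>x. tau differentiable at x"
  shows "deriv tau (y + real_of_int K) = deriv tau y"
proof (cases "K \<ge> 0")
  case True
  then have "y + real_of_int K = y + real (nat K)" by simp
  then show ?thesis using deriv_periodic_nat[OF assms, of y "nat K"] by (simp only:)
next
  case False
  then have "y = (y + real_of_int K) + real (nat (- K))" by simp
  then have "deriv tau y = deriv tau ((y + real_of_int K) + real (nat (- K)))" by (rule arg_cong)
  then show ?thesis using deriv_periodic_nat[OF assms] by simp
qed

lemma deriv_bounded:
  fixes tau :: "real \<Rightarrow> real"
  assumes "\<forall>x. tau (x + 1) = tau x" "\<forall>x. tau differentiable at x"
    and "continuous_on UNIV (deriv tau)"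
  shows "\<exists>B. \<forall>y. \<bar>deriv tau y\<bar> \<le> B"
proof -
  have "compact (deriv tau ` {0..1})"
    by (rule compact_continuous_image) (auto intro: continuous_on_subset[OF assms(3)])
  then obtain B where B: "\<And>z. z \<in> deriv tau ` {0..1} \<Longrightarrow> norm z \<le> B"
    using compact_imp_bounded bounded_iff by metis
  have "\<bar>deriv tau y\<bar> \<le> B" for y
  proof -
    have "deriv tau y = deriv tau (y + real_of_int (- \<lfloor>y\<rfloor>))"
      using deriv_periodic_int[OF assms(1,2), of y "- \<lfloor>y\<rfloor>"] by (rule sym)
    have "y + real_of_int (- \<lfloor>y\<rfloor>) \<in> {0..1}"
      using floor_correct[of y] by (simp; linarith)
    then have "deriv tau (y + real_of_int (- \<lfloor>y\<rfloor>)) \<in> deriv tau ` {0..1}" by (rule imageI)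
    from B[OF this] show ?thesis using \<open>deriv tau y = _\<close> by simp
  qed
  then show ?thesis by blast
qed

lemma Y_rel:
  fixes tau :: "real \<Rightarrow> real"
  assumes b: "b > 0" and p: "p > 0"
    and diff: "\<forall>x. tau differentiable at x"
    and per: "\<forall>x. tau (x + 1) = tau x"
    and summ: "\<And>x j. summable (\<lambda>m. (1 / (real b * lam)) ^ (Suc m) *
      deriv tau (x / real b ^ (Suc m) + (\<Sum>i<Suc m. real (j i) / real b ^ (Suc m - i))))"
  shows "Y b lam (\<lambda>x. tau (real p * x)) x j = real p * Y b lam tau (real p * x) (sig b p j)"
proof -
  have trm: "(1 / (real b * lam)) ^ (Suc m) *
      deriv (\<lambda>x. tau (real p * x)) (x / real b ^ (Suc m) + (\<Sum>i<Suc m. real (j i) / real b ^ (Suc m - i)))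
    = real p * ((1 / (real b * lam)) ^ (Suc m) *
      deriv tau (real p * x / real b ^ (Suc m) + (\<Sum>i<Suc m. real (sig b p j i) / real b ^ (Suc m - i))))"
    for m
  proof -
    define n where "n = Suc m"
    define K where "K = p * NN b j n div b ^ n"
    have bn: "real b ^ n > 0" using b by simp
    have eqn: "p * NN b j n = K * b ^ n + NN b (sig b p j) n"
      unfolding K_def NN_sig[OF b] by (rule div_mult_mod_eq[symmetric])
    then have "real (p * NN b j n) = real (K * b ^ n + NN b (sig b p j) n)"
      by (rule arg_cong)
    then have eqr: "real p * real (NN b j n) = real K * real b ^ n + real (NN b (sig b p j) n)"
      by simp
    have "real p * (x / real b ^ n + real (NN b j n) / real b ^ n)
        = (real p * x / real b ^ n + real (NN b (sig b p j) n) / real b ^ n) + real K"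
      using bn eqr by (simp add: field_simps)
    then have "deriv tau (real p * (x / real b ^ n + real (NN b j n) / real b ^ n))
        = deriv tau (real p * x / real b ^ n + real (NN b (sig b p j) n) / real b ^ n)"
      using deriv_periodic_nat[OF per diff] by simp
    then show ?thesis
      unfolding n_def[symmetric] sum_NN[OF b] deriv_scale_fun[OF diff] by simp
  qed
  show ?thesis
    unfolding Y_def trm by (subst suminf_mult[OF summ]) simp
qed



theorem mainTheorem9:
  fixes b p k :: nat and lam :: real and tau :: "real \<Rightarrow> real"
  assumes "b \<ge> 2" and "1 / real b < lam" and "lam < 1"
    and "k \<ge> 1"
    and "\<forall>x. tau (x + 1) = tau x"
    and "Ck k tau"
    and "p \<ge> 2" and "coprime p b"
  shows "(\<forall>t. regulating_period b lam k tau t \<longleftrightarrow>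
               regulating_period b lam k (\<lambda>x. tau (real p * x)) (t / real p))
         \<and> (condition_H b lam tau \<longleftrightarrow> condition_H b lam (\<lambda>x. tau (real p * x)))"
proof
  have b0: "b > 0" and p0: "p > 0" using assms by auto
  have pr: "real p \<noteq> 0" using p0 by simp
  have Wsc: "W b lam (\<lambda>x. tau (real p * x)) y = W b lam tau (real p * y)" for y
    unfolding W_def by (simp add: mult.left_commute)
  show "\<forall>t. regulating_period b lam k tau t \<longleftrightarrow>
               regulating_period b lam k (\<lambda>x. tau (real p * x)) (t / real p)"
  proof
    fix t
    define g where "g = (\<lambda>x. W b lam tau (x + t) - W b lam tau x)"
    have eq: "(\<lambda>x. W b lam (\<lambda>x. tau (real p * x)) (x + t / real p) - W b lam (\<lambda>x. tau (real p * x)) x)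
        = (\<lambda>x. g (real p * x))"
      using pr by (simp add: Wsc g_def distrib_left)
    have r1: "regulating_period b lam k tau t = Ck k g" by (simp add: regulating_period_def g_def)
    have r2: "regulating_period b lam k (\<lambda>x. tau (real p * x)) (t / real p) = Ck k (\<lambda>x. g (real p * x))"
      unfolding regulating_period_def eq ..
    show "regulating_period b lam k tau t \<longleftrightarrow>
               regulating_period b lam k (\<lambda>x. tau (real p * x)) (t / real p)"
      unfolding r1 r2 using Ck_scale_iff[OF pr] by simp
  qed
next
  have b0: "b > 0" and p0: "p > 0" using assms by auto
  have pr: "real p \<noteq> 0" using p0 by simp
  have cc: "\<forall>j<k. \<forall>x. (deriv ^^ j) tau differentiable at x" using assms(6) by (simp add: Ck_def)
  have diff: "\<forall>x. tau differentiable at x"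
    using cc[rule_format, of 0] assms(4) by simp
  have cont: "continuous_on UNIV (deriv tau)"
  proof (cases "k = 1")
    case True then show ?thesis using assms(6) by (simp add: Ck_def)
  next
    case False
    then have "\<forall>x. deriv tau differentiable at x"
      using cc[rule_format, of 1] assms(4) False by simp
    then have "deriv tau differentiable_on UNIV" by (simp add: differentiable_on_def)
    then show ?thesis by (rule differentiable_imp_continuous_on)
  qed
  obtain B where B: "\<And>y. \<bar>deriv tau y\<bar> \<le> B"
    using deriv_bounded[OF assms(5) diff cont] by blast
  define \<gamma> where "\<gamma> = 1 / (real b * lam)"
  have "real b * lam > 1"
    using assms(2) b0 by (simp add: field_simps)
  then have g0: "0 < \<gamma>" and g1: "\<gamma> < 1" unfolding \<gamma>_def by (auto simp: field_simps)
  have summ: "summable (\<lambda>m. (1 / (real b * lam)) ^ (Suc m) *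
      deriv tau (x / real b ^ (Suc m) + (\<Sum>i<Suc m. real (j i) / real b ^ (Suc m - i))))" for x j
  proof (rule summable_comparison_test')
    show "summable (\<lambda>m. B * (\<gamma> * \<gamma> ^ m))"
      using g0 g1 by (intro summable_mult summable_geometric) simp
    fix m :: nat
    show "norm ((1 / (real b * lam)) ^ (Suc m) *
      deriv tau (x / real b ^ (Suc m) + (\<Sum>i<Suc m. real (j i) / real b ^ (Suc m - i)))) \<le> B * (\<gamma> * \<gamma> ^ m)"
      unfolding \<gamma>_def[symmetric] using g0 B
      by (simp add: abs_mult mult_left_mono mult.commute)
  qed
  have Yr: "Y b lam (\<lambda>x. tau (real p * x)) x j = real p * Y b lam tau (real p * x) (sig b p j)" for x j
    by (rule Y_rel[OF b0 p0 diff assms(5) summ])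
  have key: "(\<exists>x. Y b lam (\<lambda>x. tau (real p * x)) x j - Y b lam (\<lambda>x. tau (real p * x)) x i \<noteq> 0)
      \<longleftrightarrow> (\<exists>y. Y b lam tau y (sig b p j) - Y b lam tau y (sig b p i) \<noteq> 0)" for i j
  proof
    assume "\<exists>x. Y b lam (\<lambda>x. tau (real p * x)) x j - Y b lam (\<lambda>x. tau (real p * x)) x i \<noteq> 0"
    then obtain x where "Y b lam (\<lambda>x. tau (real p * x)) x j - Y b lam (\<lambda>x. tau (real p * x)) x i \<noteq> 0" by blast
    then have "Y b lam tau (real p * x) (sig b p j) - Y b lam tau (real p * x) (sig b p i) \<noteq> 0"
      unfolding Yr by (simp add: right_diff_distrib[symmetric])
    then show "\<exists>y. Y b lam tau y (sig b p j) - Y b lam tau y (sig b p i) \<noteq> 0" by blast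
  next
    assume "\<exists>y. Y b lam tau y (sig b p j) - Y b lam tau y (sig b p i) \<noteq> 0"
    then obtain y where y: "Y b lam tau y (sig b p j) - Y b lam tau y (sig b p i) \<noteq> 0" by blast
    have "real p * (y / real p) = y" using pr by simp
    then have "Y b lam (\<lambda>x. tau (real p * x)) (y / real p) j - Y b lam (\<lambda>x. tau (real p * x)) (y / real p) i \<noteq> 0"
      unfolding Yr using y pr by (simp add: right_diff_distrib[symmetric])
    then show "\<exists>x. Y b lam (\<lambda>x. tau (real p * x)) x j - Y b lam (\<lambda>x. tau (real p * x)) x i \<noteq> 0" by blast
  qed
  show "condition_H b lam tau \<longleftrightarrow> condition_H b lam (\<lambda>x. tau (real p * x))"
    unfolding condition_H_def key
  proof (intro iffI ballI impI)
    fix i j assume H: "\<forall>i\<in>Sigma_b b. \<forall>j\<in>Sigma_b b. i \<noteq> j \<longrightarrow> (\<exists>x. Y b lam tau x j - Y b lam tau x i \<noteq> 0)"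
      and i: "i \<in> Sigma_b b" and j: "j \<in> Sigma_b b" and ij: "i \<noteq> j"
    have "sig b p i \<noteq> sig b p j" using sig_inj[OF b0 assms(8) i j] ij by blast
    then show "\<exists>y. Y b lam tau y (sig b p j) - Y b lam tau y (sig b p i) \<noteq> 0"
      using H sig_in[OF b0] by blast
  next
    fix i' j' assume H: "\<forall>i\<in>Sigma_b b. \<forall>j\<in>Sigma_b b. i \<noteq> j \<longrightarrow> (\<exists>y. Y b lam tau y (sig b p j) - Y b lam tau y (sig b p i) \<noteq> 0)"
      and i: "i' \<in> Sigma_b b" and j: "j' \<in> Sigma_b b" and ij: "i' \<noteq> j'"
    obtain i where i1: "i \<in> Sigma_b b" "sig b p i = i'" using sig_surj[OF b0 assms(8) i] by blast
    obtain j where j1: "j \<in> Sigma_b b" "sig b p j = j'" using sig_surj[OF b0 assms(8) j] by blast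
    have "i \<noteq> j" using ij i1 j1 by blast
    then show "\<exists>x. Y b lam tau x j' - Y b lam tau x i' \<noteq> 0"
      using H i1 j1 by blast
  qed
qed


end
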